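(* Let $n\geq2$ be an integer, $\beta\in\mathbb{Z}_p$, and let $A\in\mathbb{L}_p$ be any element with \[A=(-1)^n\zeta_{2(p-1)}p^{\frac{1}{p^{n-1}(p-1)}}\sigma_n\left(1+(-1)^n\beta\zeta_{2(p-1)}p^{\frac{1}{p^{n-1}(p-1)}}\right)+O\!\left(p^{\frac{2}{p^{n-1}(p-1)}}\right).\] Then for every integer $1\leq k\leq 2p-1$, writing $\zeta=\zeta_{2(p-1)}$, \begin{align*} A^k={}&(-1)^{nk}\zeta^k p^{\frac{k}{p^n(p-1)}}+\mathds{1}_{\leq p+1}(k)\cdot k(-1)^{nk}\zeta^k p^{\frac{k+p-1}{p^n(p-1)}}\sigma_{n+1}\\ &+\mathds{1}_2(k)\cdot\zeta^2p^{\frac{2}{p^{n-1}(p-1)}}\sigma_{n+1}^2+\mathds{1}_3(k)\cdot3(-1)^n\zeta^3p^{\frac{2p^2-p+2}{p^{n+1}(p-1)}}\\ &+\mathds{1}_{\leq p-1}(k)\cdot\beta k(-1)^{n(k+1)}\zeta^{k+1}p^{\frac{k+p}{p^n(p-1)}}+\mathds{1}_1(k)\cdot\beta\zeta^2p^{\frac{2}{p^{n-1}(p-1)}}\sigma_{n+1}+O\!\left(p^{\frac{2}{p^{n-1}(p-1)}}\right). \end{align*}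
   Context: $p\geq 3$ is a prime. $\mathbb{L}_p=W(\bar{\mathbb{F}}_p)((p^{\mathbb{Q}}))$ is the $p$-adic Mal'cev–Neumann field: each element is uniquely $\sum_{x\in\mathbb{Q}}[\alpha_x]p^x$ with $\alpha_x\in\bar{\mathbb{F}}_p$, $[\cdot]$ the Teichmüller lift, and well-ordered support; it is an algebraically closed complete field with valuation $v_p(\alpha)=\min$ of the support ($v_p(p)=1$), containing $\bar{\mathbb{Q}}_p$ (hence $\mathbb{Z}_p$) via a fixed continuous embedding. For $x\in\mathbb{Q}$, $p^x$ denotes $[1]p^x$. For $r\in\mathbb{Q}$, "$\alpha=\beta+O(p^r)$" means $v_p(\alpha-\beta)\geq r$. For $n\geq1$, $\sigma_n=\sum_{k=n}^{\infty}p^{-1/p^k}\in\mathbb{L}_p$. $\zeta_{2(p-1)}\in W(\bar{\mathbb{F}}_p)$ is a fixed primitive $2(p-1)$-th root of unity. For an integer $s\geq1$, $\mathds{1}_{\leq s}$ is the indicator function of $\{1,\dots,s\}$ and $\mathds{1}_s$ is the indicator function of $\{s\}$. *)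

theory Defs
  imports Complex_Main "HOL-Computational_Algebra.Primes"
begin

text \<open>The valuation v is only meaningful on nonzero elements; v 0 is treated as +infinity
through the predicate below.\<close>

text \<open>"x = y + O(p^r)": v(x - y) \<ge> r (with v(0) = +infinity).\<close>
definition approx :: "('a::field \<Rightarrow> rat) \<Rightarrow> 'a \<Rightarrow> 'a \<Rightarrow> rat \<Rightarrow> bool" where
  "approx v x y r \<longleftrightarrow> x = y \<or> r \<le> v (x - y)"

definition is_valuation :: "('a::field \<Rightarrow> rat) \<Rightarrow> bool" where
  "is_valuation v \<longleftrightarrow>
     (\<forall>x y. x \<noteq> 0 \<longrightarrow> y \<noteq> 0 \<longrightarrow> v (x * y) = v x + v y) \<and>
     (\<forall>x y. x \<noteq> 0 \<longrightarrow> y \<noteq> 0 \<longrightarrow> x + y \<noteq> 0 \<longrightarrow> min (v x) (v y) \<le> v (x + y))"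

definition in_Zp :: "('a::field \<Rightarrow> rat) \<Rightarrow> 'a \<Rightarrow> bool" where
  "in_Zp v b \<longleftrightarrow> (\<forall>r::rat. \<exists>m::int. approx v b (of_int m) r)"

end

theory Submission
  imports Defs
begin
definition gev :: "('a::field \<Rightarrow> rat) \<Rightarrow> 'a \<Rightarrow> rat \<Rightarrow> bool" where
  "gev v x r \<longleftrightarrow> x = 0 \<or> r \<le> v x"

lemma approx_gev: "approx v x y r \<longleftrightarrow> gev v (x - y) r"
  by (auto simp: approx_def gev_def)

context
  fixes v :: "'a::field \<Rightarrow> rat"
  assumes val: "is_valuation v"
begin

lemma v_mult: "x \<noteq> 0 \<Longrightarrow> y \<noteq> 0 \<Longrightarrow> v (x*y) = v x + v y"
  using val by (auto simp: is_valuation_def)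

lemma v_add: "x \<noteq> 0 \<Longrightarrow> y \<noteq> 0 \<Longrightarrow> x + y \<noteq> 0 \<Longrightarrow> min (v x) (v y) \<le> v (x+y)"
  using val by (auto simp: is_valuation_def)

lemma v_one: "v 1 = 0"
  using v_mult[of 1 1] by simp

lemma v_m1: "v (-1) = 0"
  using v_mult[of "-1" "-1"] by (simp add: v_one)

lemma v_uminus: "v (- x) = v x"
proof (cases "x = 0")
  case False
  then have "v ((-1) * x) = v (-1) + v x" by (intro v_mult) auto
  then show ?thesis by (simp add: v_m1)
qed simp

lemma v_power: "x \<noteq> 0 \<Longrightarrow> v (x ^ m) = of_nat m * v x"
  by (induction m) (auto simp: v_one v_mult algebra_simps)

lemma gev_0: "gev v 0 r" by (simp add: gev_def)
lemma gev_1: "r \<le> 0 \<Longrightarrow> gev v 1 r" by (simp add: gev_def v_one)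
lemma gev_mono: "gev v x r \<Longrightarrow> s \<le> r \<Longrightarrow> gev v x s" by (auto simp: gev_def)
lemma gev_uminus: "gev v x r \<Longrightarrow> gev v (-x) r" by (simp add: gev_def v_uminus)
lemma gev_add: assumes "gev v x r" "gev v y r" shows "gev v (x+y) r"
proof -
  consider "x = 0" | "y = 0" | "x + y = 0" | "x \<noteq> 0" "y \<noteq> 0" "x+y \<noteq> 0" by blast
  then show ?thesis
  proof cases
    case 4
    then have "min (v x) (v y) \<le> v (x+y)" by (rule v_add)
    with assms 4 show ?thesis by (auto simp: gev_def)
  qed (use assms in \<open>auto simp: gev_def\<close>)
qed
lemma gev_diff: "gev v x r \<Longrightarrow> gev v y r \<Longrightarrow> gev v (x-y) r"
  using gev_add[of x r "-y"] gev_uminus[of y r] by simp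
lemma gev_mult: assumes "gev v x r" "gev v y s" shows "gev v (x*y) (r+s)"
  using assms by (cases "x = 0 \<or> y = 0") (auto simp: gev_def v_mult)
lemma gev_mult0L: "gev v x 0 \<Longrightarrow> gev v y r \<Longrightarrow> gev v (x*y) r"
  using gev_mult[of x 0 y r] by simp
lemma gev_mult0R: "gev v x r \<Longrightarrow> gev v y 0 \<Longrightarrow> gev v (x*y) r"
  using gev_mult[of x r y 0] by simp
lemma gev_power: assumes "gev v x r" shows "gev v (x^k) (of_nat k * r)"
proof (induction k)
  case 0 then show ?case by (simp add: gev_1)
next
  case (Suc k)
  have "gev v (x * x^k) (r + of_nat k * r)" by (rule gev_mult[OF assms Suc])
  then show ?case by (simp add: algebra_simps)
qed
lemma gev_power0: "gev v x 0 \<Longrightarrow> gev v (x^k) 0"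
  using gev_power[of x 0 k] by simp
lemma gev_sum: assumes "\<And>i. i \<in> S \<Longrightarrow> gev v (f i) r" shows "gev v (sum f S) r"
  using assms by (induction S rule: infinite_finite_induct) (auto intro: gev_add simp: gev_0)

lemma gev_xi: "gev v x y \<Longrightarrow> 0 < xi \<Longrightarrow> c \<le> d \<Longrightarrow> y = d * xi \<Longrightarrow> gev v x (c * xi)"
  by (erule gev_mono) (simp add: mult_right_mono)

lemma gev_binom_rem:
  assumes "gev v y r" "0 \<le> r" "\<And>m. gev v (of_nat m :: 'a) 0"
  shows "gev v ((1+y)^k - 1 - of_nat k * y - of_nat (k choose 2) * y^2) (3*r)"
proof (induction k)
  case 0 then show ?case by (simp add: gev_0 numeral_2_eq_2)
next
  case (Suc k)
  have c: "Suc k choose 2 = k + (k choose 2)" by (simp add: numeral_2_eq_2)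
  have eq: "(1+y)^Suc k - 1 - of_nat (Suc k) * y - of_nat (Suc k choose 2) * y^2
    = (1+y) * ((1+y)^k - 1 - of_nat k * y - of_nat (k choose 2) * y^2) + of_nat (k choose 2) * y^3"
    unfolding c by (simp add: algebra_simps power2_eq_square power3_eq_cube)
  have g1: "gev v (1+y) 0"
    by (rule gev_add[OF gev_1 gev_mono[OF assms(1)]]) (use assms in auto)
  have g2: "gev v ((1+y) * ((1+y)^k - 1 - of_nat k * y - of_nat (k choose 2) * y^2)) (3*r)"
    by (rule gev_mult0L[OF g1 Suc])
  have g3: "gev v (y^3) (3*r)" using gev_power[OF assms(1), of 3] by simp
  have g4: "gev v (of_nat (k choose 2) * y^3) (3*r)" by (rule gev_mult0L[OF assms(3) g3])
  show ?case unfolding eq by (rule gev_add[OF g2 g4])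
qed

end

theorem lemma2p4:
  fixes p :: nat and n :: nat
    and v :: "'a::field \<Rightarrow> rat"
    and pw :: "rat \<Rightarrow> 'a"
    and \<zeta> :: 'a
    and \<sigma> :: "nat \<Rightarrow> 'a"
    and \<beta> A :: 'a
  assumes p: "prime p" "p \<ge> 3"
    and val: "is_valuation v"
    and v_p: "v (of_nat p) = 1"
    and v_int: "\<And>m::int. m \<noteq> 0 \<Longrightarrow> of_int m \<noteq> (0::'a) \<and> 0 \<le> v (of_int m)"
    and pw_add: "\<And>x y. pw (x + y) = pw x * pw y"
    and pw_one: "pw 1 = of_nat p"
    and pw_nz: "\<And>x. pw x \<noteq> 0"
    and v_pw: "\<And>x. v (pw x) = x"
    and zeta_root: "\<zeta> ^ (2 * (p - 1)) = 1"
    and zeta_prim: "\<And>j. 0 < j \<Longrightarrow> j < 2 * (p - 1) \<Longrightarrow> \<zeta> ^ j \<noteq> 1"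
    and sigma_rec: "\<And>m. m \<ge> 1 \<Longrightarrow> \<sigma> m = pw (- 1 / of_nat (p ^ m)) + \<sigma> (m + 1)"
    and sigma_nz: "\<And>m. m \<ge> 1 \<Longrightarrow> \<sigma> m \<noteq> 0"
    and sigma_v: "\<And>m. m \<ge> 1 \<Longrightarrow> v (\<sigma> m) = - 1 / of_nat (p ^ m)"
    and n: "n \<ge> 2"
    and beta: "in_Zp v \<beta>"
    and A: "approx v A
              ((-1) ^ n * \<zeta> * pw (1 / (of_nat (p ^ (n - 1)) * (of_nat p - 1))) * \<sigma> n *
                 (1 + (-1) ^ n * \<beta> * \<zeta> * pw (1 / (of_nat (p ^ (n - 1)) * (of_nat p - 1)))))
              (2 / (of_nat (p ^ (n - 1)) * (of_nat p - 1)))"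
  shows "\<forall>k::nat. 1 \<le> k \<and> k \<le> 2 * p - 1 \<longrightarrow>
    approx v (A ^ k)
     ((-1) ^ (n * k) * \<zeta> ^ k * pw (of_nat k / (of_nat (p ^ n) * (of_nat p - 1)))
      + (if k \<le> p + 1 then of_nat k * (-1) ^ (n * k) * \<zeta> ^ k
            * pw ((of_nat k + of_nat p - 1) / (of_nat (p ^ n) * (of_nat p - 1))) * \<sigma> (n + 1)
         else 0)
      + (if k = 2 then \<zeta> ^ 2 * pw (2 / (of_nat (p ^ (n - 1)) * (of_nat p - 1))) * \<sigma> (n + 1) ^ 2
         else 0)
      + (if k = 3 then 3 * (-1) ^ n * \<zeta> ^ 3
            * pw ((2 * of_nat p ^ 2 - of_nat p + 2) / (of_nat (p ^ (n + 1)) * (of_nat p - 1)))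
         else 0)
      + (if k \<le> p - 1 then \<beta> * of_nat k * (-1) ^ (n * (k + 1)) * \<zeta> ^ (k + 1)
            * pw ((of_nat k + of_nat p) / (of_nat (p ^ n) * (of_nat p - 1)))
         else 0)
      + (if k = 1 then \<beta> * \<zeta> ^ 2 * pw (2 / (of_nat (p ^ (n - 1)) * (of_nat p - 1))) * \<sigma> (n + 1)
         else 0))
     (2 / (of_nat (p ^ (n - 1)) * (of_nat p - 1)))"
proof (intro allI impI)
  fix k :: nat
  assume k: "1 \<le> k \<and> k \<le> 2 * p - 1"
  have k1: "1 \<le> k" using k by simp
  define P :: rat where "P = of_nat p"
  define Q :: rat where "Q = of_nat (p ^ (n - 1))"
  have P3: "P \<ge> 3" using p(2) by (simp add: P_def)
  have Qpos: "Q > 0" using p(1) by (simp add: Q_def prime_gt_0_nat)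
  have pn0: "p ^ n = p * p ^ (n - 1)" using n by (cases n) auto
  have pn: "(of_nat (p ^ n) :: rat) = P * Q" unfolding pn0 by (simp add: P_def Q_def)
  have pn1: "(of_nat (p ^ (n+1)) :: rat) = P * P * Q" using pn by (simp add: P_def)
  have pn2: "(of_nat (p ^ (n+1+1)) :: rat) = P * P * P * Q" using pn by (simp add: P_def)
  define \<xi> :: rat where "\<xi> = 1 / (P * Q * (P - 1))"
  have xipos: "\<xi> > 0" unfolding \<xi>_def using P3 Qpos by simp
  define ip :: rat where "ip = 1 / P"
  have ip: "0 < ip" "ip \<le> 1/3" "P * ip = 1" using P3 by (auto simp: ip_def field_simps)
  have E1: "1 / (of_nat (p ^ (n - 1)) * (of_nat p - 1) :: rat) = P * \<xi>"
    unfolding \<xi>_def P_def[symmetric] Q_def[symmetric] using Qpos P3 by (simp add: field_simps)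
  have E2: "2 / (of_nat (p ^ (n - 1)) * (of_nat p - 1) :: rat) = 2 * P * \<xi>"
    unfolding \<xi>_def P_def[symmetric] Q_def[symmetric] using Qpos P3 by (simp add: field_simps)
  have E3: "of_nat k / (of_nat (p ^ n) * (of_nat p - 1) :: rat) = of_nat k * \<xi>"
    unfolding \<xi>_def pn P_def[symmetric] by simp
  have E4: "(of_nat k + of_nat p - 1) / (of_nat (p ^ n) * (of_nat p - 1) :: rat) = (of_nat k + P - 1) * \<xi>"
    unfolding \<xi>_def pn P_def[symmetric] by simp
  have E6: "(of_nat k + of_nat p) / (of_nat (p ^ n) * (of_nat p - 1) :: rat) = (of_nat k + P) * \<xi>"
    unfolding \<xi>_def pn P_def[symmetric] by simp
  have E5: "(2 * of_nat p ^ 2 - of_nat p + 2) / (of_nat (p ^ (n + 1)) * (of_nat p - 1) :: rat)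
      = (3 + 2 * (P - 1) - 2 * (1 - ip)) * \<xi>"
    unfolding \<xi>_def pn1 P_def[symmetric] ip_def using Qpos P3 by (simp add: field_simps power2_eq_square)
  have S1: "- 1 / (of_nat (p ^ n) :: rat) = - ((P - 1) * \<xi>)"
    unfolding \<xi>_def pn using Qpos P3 by (simp add: field_simps)
  have S2: "- 1 / (of_nat (p ^ (n+1)) :: rat) = - ((1 - ip) * \<xi>)"
    unfolding \<xi>_def pn1 ip_def using Qpos P3 by (simp add: field_simps)
  have S3: "- 1 / (of_nat (p ^ (n+1+1)) :: rat) = - ((ip - ip * ip) * \<xi>)"
    unfolding \<xi>_def pn2 ip_def using Qpos P3 by (simp add: field_simps)
  have pw_mul: "\<And>x y. pw x * pw y = pw (x + y)" by (simp add: pw_add)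
  have pw0: "pw 0 = 1"
  proof -
    have "pw 0 * pw 0 = pw 0 * 1" using pw_add[of 0 0] by simp
    then show ?thesis using pw_nz[of 0] by (metis mult_left_cancel)
  qed
  have pw_pow: "\<And>x m. pw x ^ m = pw (of_nat m * x)"
  proof -
    fix x m show "pw x ^ m = pw (of_nat m * x)"
      by (induction m) (simp_all add: pw0 pw_mul algebra_simps)
  qed
  have pw_neg: "\<And>x. pw (- x) = 1 / pw x"
  proof -
    fix x have "pw (-x) * pw x = 1" using pw_mul[of "-x" x] pw0 by simp
    then show "pw (- x) = 1 / pw x" using pw_nz[of x] by (simp add: field_simps)
  qed
  have gn: "\<And>m. gev v (of_nat m :: 'a) 0"
  proof -
    fix m :: nat
    show "gev v (of_nat m :: 'a) 0"
      using v_int[of "int m"] unfolding gev_def by (cases "m = 0") auto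
  qed
  have gpw: "\<And>x. gev v (pw x) x" by (simp add: gev_def v_pw)
  define \<epsilon> :: 'a where "\<epsilon> = (-1) ^ n"
  have eps: "\<epsilon> = 1 \<or> \<epsilon> = -1" unfolding \<epsilon>_def by (cases "even n") auto
  have geps: "gev v \<epsilon> 0" using eps by (auto simp: gev_def v_one[OF val] v_m1[OF val])
  have zeta_nz: "\<zeta> \<noteq> 0"
  proof
    assume "\<zeta> = 0"
    moreover have "2 * (p - 1) \<noteq> 0" using p(2) by simp
    ultimately show False using zeta_root by (simp add: zero_power)
  qed
  have gz: "gev v \<zeta> 0"
  proof -
    have "v (\<zeta> ^ (2 * (p - 1))) = of_nat (2 * (p - 1)) * v \<zeta>" by (rule v_power[OF val zeta_nz])
    then have "of_nat (2 * (p - 1)) * v \<zeta> = 0" using zeta_root v_one[OF val] by simp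
    then have "v \<zeta> = 0" using p(2) by simp
    then show ?thesis by (simp add: gev_def)
  qed
  have gbeta: "gev v \<beta> 0"
  proof -
    obtain m :: int where m: "approx v \<beta> (of_int m) 0" using beta unfolding in_Zp_def by blast
    have g1: "gev v (\<beta> - of_int m) 0" using m by (simp add: approx_gev)
    have g2: "gev v (of_int m :: 'a) 0" using v_int[of m] by (cases "m = 0") (auto simp: gev_def)
    show ?thesis using gev_add[OF val g1 g2] by simp
  qed
  define u where "u = pw \<xi>"
  define w where "w = pw ((P - 1) * \<xi>)"
  define t where "t = pw (- ((1 - ip) * \<xi>))"
  define s where "s = \<sigma> (n + 1)"
  define s2 where "s2 = \<sigma> (n + 1 + 1)"
  have wnz: "w \<noteq> 0" unfolding w_def by (rule pw_nz)
  have c_P: "pw (P * \<xi>) = u * w"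
    unfolding u_def w_def pw_mul by (rule arg_cong[where f = pw]) (simp add: algebra_simps)
  have c_2Pm1: "pw ((2 * P - 1) * \<xi>) = u * w * w"
    unfolding u_def w_def pw_mul by (rule arg_cong[where f = pw]) (simp add: algebra_simps)
  have c_2P: "pw (2 * P * \<xi>) = u * u * w * w"
    unfolding u_def w_def pw_mul by (rule arg_cong[where f = pw]) (simp add: algebra_simps)
  have c_k: "pw (of_nat k * \<xi>) = u ^ k" unfolding u_def pw_pow ..
  have c_kP1: "pw ((of_nat k + P - 1) * \<xi>) = u ^ k * w"
    unfolding u_def w_def pw_pow pw_mul by (rule arg_cong[where f = pw]) (simp add: algebra_simps)
  have c_kP: "pw ((of_nat k + P) * \<xi>) = u ^ k * u * w"
    unfolding u_def w_def pw_pow pw_mul by (rule arg_cong[where f = pw]) (simp add: algebra_simps)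
  have c_5: "pw ((3 + 2 * (P - 1) - 2 * (1 - ip)) * \<xi>) = u ^ 3 * w ^ 2 * t ^ 2"
    unfolding u_def w_def t_def pw_pow pw_mul by (rule arg_cong[where f = pw]) (simp add: algebra_simps)
  have c_m: "pw (- ((P - 1) * \<xi>)) = 1 / w" unfolding w_def by (rule pw_neg)
  have sig_n: "\<sigma> n = 1 / w + s"
    using sigma_rec[of n] n unfolding S1 c_m s_def by simp
  have sig_n1: "s = t + s2"
  proof -
    have "\<sigma> (n+1) = pw (- 1 / of_nat (p ^ (n+1))) + \<sigma> (n+1+1)" by (rule sigma_rec) simp
    then show ?thesis unfolding S2 s_def s2_def t_def .
  qed
  have gu: "gev v u \<xi>" unfolding u_def by (rule gpw)
  have gw: "gev v w ((P - 1) * \<xi>)" unfolding w_def by (rule gpw)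
  have gt: "gev v t (- ((1 - ip) * \<xi>))" unfolding t_def by (rule gpw)
  have gs: "gev v s (- ((1 - ip) * \<xi>))"
    using sigma_v[of "n+1"] unfolding s_def S2 by (simp add: gev_def)
  have gs2: "gev v s2 (- ((ip - ip * ip) * \<xi>))"
    using sigma_v[of "n+1+1"] unfolding s2_def S3 by (simp add: gev_def)
  define X where "X = \<epsilon> * \<zeta> * u"
  define a where "a = w * s"
  define b where "b = \<epsilon> * \<beta> * \<zeta> * u * w"
  define c where "c = \<epsilon> * \<beta> * \<zeta> * u * w * w * s"
  define Y where "Y = a + b + c"
  define r where "r = (P - 2 + ip) * \<xi>"
  have r0: "0 \<le> r" unfolding r_def using P3 ip xipos by simp
  have gX: "gev v X \<xi>" unfolding X_def by (rule gev_mult0L[OF val gev_mult0L[OF val geps gz] gu])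
  have ga: "gev v a r"
  proof -
    have "gev v a ((P - 1) * \<xi> + - ((1 - ip) * \<xi>))" unfolding a_def by (rule gev_mult[OF val gw gs])
    then show ?thesis unfolding r_def by (simp add: algebra_simps)
  qed
  have gb: "gev v b (P * \<xi>)"
  proof -
    have "gev v b (\<xi> + (P - 1) * \<xi>)" unfolding b_def
      by (rule gev_mult[OF val gev_mult0L[OF val gev_mult0L[OF val gev_mult0L[OF val geps gbeta] gz] gu] gw])
    then show ?thesis by (simp add: algebra_simps)
  qed
  have gc: "gev v c ((2 * P - 2 + ip) * \<xi>)"
  proof -
    have "gev v c (((\<xi> + (P - 1) * \<xi>) + (P - 1) * \<xi>) + - ((1 - ip) * \<xi>))" unfolding c_def
      by (rule gev_mult[OF val gev_mult[OF val gev_mult[OF val gev_mult0L[OF val gev_mult0L[OF val gev_mult0L[OF val geps gbeta] gz] gu] gw] gw] gs])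
    then show ?thesis by (simp add: algebra_simps)
  qed
  have rP: "r \<le> P * \<xi>" unfolding r_def using ip xipos by (intro mult_right_mono) auto
  have rc: "r \<le> (2 * P - 2 + ip) * \<xi>" unfolding r_def using ip xipos P3 by (intro mult_right_mono) auto
  have Pc: "P * \<xi> \<le> (2 * P - 2 + ip) * \<xi>" using ip xipos P3 by (intro mult_right_mono) auto
  have gY: "gev v Y r" unfolding Y_def
    by (intro gev_add[OF val] ga gev_mono[OF val gb rP] gev_mono[OF val gc rc])
  define M where "M = X * (1 + Y)"
  have MX: "(-1) ^ n * \<zeta> * pw (P * \<xi>) * \<sigma> n * (1 + (-1) ^ n * \<beta> * \<zeta> * pw (P * \<xi>)) = M"
    unfolding M_def \<epsilon>_def[symmetric] c_P sig_n X_def Y_def a_def b_def c_def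
    using eps wnz by (auto simp: field_simps)
  have hA: "gev v (A - M) (2 * P * \<xi>)"
    using A unfolding E1 E2 MX approx_gev .
  define T1 where "T1 = \<epsilon> ^ k * \<zeta> ^ k * u ^ k"
  define T2 where "T2 = (if k \<le> p + 1 then of_nat k * \<epsilon> ^ k * \<zeta> ^ k * (u ^ k * w) * s else 0)"
  define T3 where "T3 = (if k = 2 then \<zeta> ^ 2 * (u * u * w * w) * s ^ 2 else 0)"
  define T4 where "T4 = (if k = 3 then 3 * \<epsilon> * \<zeta> ^ 3 * (u ^ 3 * w ^ 2 * t ^ 2) else 0)"
  define T5 where "T5 = (if k \<le> p - 1 then \<beta> * of_nat k * \<epsilon> ^ (k + 1) * \<zeta> ^ (k + 1) * (u ^ k * u * w) else 0)"
  define T6 where "T6 = (if k = 1 then \<beta> * \<zeta> ^ 2 * (u * u * w * w) * s else 0)"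
  have eqT: "((-1) ^ (n * k) * \<zeta> ^ k * pw (of_nat k / (of_nat (p ^ n) * (of_nat p - 1)))
      + (if k \<le> p + 1 then of_nat k * (-1) ^ (n * k) * \<zeta> ^ k
            * pw ((of_nat k + of_nat p - 1) / (of_nat (p ^ n) * (of_nat p - 1))) * \<sigma> (n + 1)
         else 0)
      + (if k = 2 then \<zeta> ^ 2 * pw (2 / (of_nat (p ^ (n - 1)) * (of_nat p - 1))) * \<sigma> (n + 1) ^ 2
         else 0)
      + (if k = 3 then 3 * (-1) ^ n * \<zeta> ^ 3
            * pw ((2 * of_nat p ^ 2 - of_nat p + 2) / (of_nat (p ^ (n + 1)) * (of_nat p - 1)))
         else 0)
      + (if k \<le> p - 1 then \<beta> * of_nat k * (-1) ^ (n * (k + 1)) * \<zeta> ^ (k + 1)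
            * pw ((of_nat k + of_nat p) / (of_nat (p ^ n) * (of_nat p - 1)))
         else 0)
      + (if k = 1 then \<beta> * \<zeta> ^ 2 * pw (2 / (of_nat (p ^ (n - 1)) * (of_nat p - 1))) * \<sigma> (n + 1)
         else 0)) = T1 + T2 + T3 + T4 + T5 + T6"
    unfolding E2 E3 E4 E5 E6 c_k c_kP1 c_kP c_2P c_5 power_mult \<epsilon>_def[symmetric] s_def[symmetric]
      T1_def T2_def T3_def T4_def T5_def T6_def
    by (simp add: power_mult_distrib)
  have main: "gev v (A ^ k - (T1 + T2 + T3 + T4 + T5 + T6)) (2 * P * \<xi>)"
  proof -
    define Z where "Z = (1 + Y) ^ k"
    define C :: 'a where "C = of_nat (k choose 2)"
    define R where "R = Z - 1 - of_nat k * Y - C * Y ^ 2"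
    define D1 where "D1 = X ^ k - T1"
    define D2 where "D2 = of_nat k * X ^ k * a - T2"
    define D5 where "D5 = of_nat k * X ^ k * b - T5"
    define D6 where "D6 = of_nat k * X ^ k * c - T6"
    define D34 where "D34 = C * X ^ k * a ^ 2 - T3 - T4"
    define D7 where "D7 = C * X ^ k * (Y ^ 2 - a ^ 2)"
    have decomp: "A ^ k - (T1 + T2 + T3 + T4 + T5 + T6)
        = (A ^ k - X ^ k * Z) + X ^ k * R + D1 + D2 + D5 + D6 + D34 + D7"
      unfolding R_def D1_def D2_def D5_def D6_def D34_def D7_def Y_def
      by (simp add: algebra_simps)
    have kP: "(of_nat k :: rat) \<ge> 1" using k1 by simp
    have Pk: "P = of_nat p" by (simp add: P_def)
    have gC: "gev v C 0" unfolding C_def by (rule gn)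
    have gXk: "gev v (X ^ k) (of_nat k * \<xi>)" by (rule gev_power[OF val gX])
    have g0: "gev v (A ^ k - X ^ k * Z) (2 * P * \<xi>)"
    proof -
      have gM: "gev v M 0" unfolding M_def
        by (rule gev_mult0L[OF val gev_mono[OF val gX] gev_add[OF val gev_1[OF val] gev_mono[OF val gY]]])
           (use xipos r0 in auto)
      have gA: "gev v A 0"
        using gev_add[OF val gev_mono[OF val hA] gM] xipos P3 by simp
      have eq: "A ^ k - X ^ k * Z = (A - M) * (\<Sum>i<k. M ^ (k - Suc i) * A ^ i)"
        unfolding Z_def M_def power_mult_distrib[symmetric] by (rule power_diff_sumr2)
      have "gev v (\<Sum>i<k. M ^ (k - Suc i) * A ^ i) 0"
        by (intro gev_sum[OF val] gev_mult0L[OF val] gev_power0[OF val] gM gA)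
      then show ?thesis unfolding eq using gev_mult0R[OF val hA] by blast
    qed
    have gR: "gev v (X ^ k * R) (2 * P * \<xi>)"
    proof (cases "k \<le> 2")
      case True
      then have "k = 1 \<or> k = 2" using k1 by auto
      then have "R = 0" unfolding R_def Z_def C_def
        by (auto simp: numeral_2_eq_2 power2_eq_square algebra_simps)
      then show ?thesis by (simp add: gev_0[OF val])
    next
      case False
      then have k3: "(of_nat k :: rat) \<ge> 3" by simp
      have "gev v (X ^ k * R) (of_nat k * \<xi> + 3 * r)" unfolding R_def Z_def C_def
        by (rule gev_mult[OF val gXk gev_binom_rem[OF val gY r0 gn]])
      then show ?thesis
        by (rule gev_xi[OF val _ xipos, where d = "of_nat k + 3 * (P - 2 + ip)"])
           (use k3 P3 ip in \<open>auto simp: r_def algebra_simps\<close>)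
    qed
    have g1: "gev v D1 (2 * P * \<xi>)"
      unfolding D1_def T1_def X_def by (simp add: power_mult_distrib gev_0[OF val])
    have g2: "gev v D2 (2 * P * \<xi>)"
    proof (cases "k \<le> p + 1")
      case True
      then show ?thesis unfolding D2_def T2_def X_def a_def
        by (simp add: power_mult_distrib gev_0[OF val] algebra_simps)
    next
      case False
      then have kk: "(of_nat k :: rat) \<ge> P + 2" unfolding Pk by simp
      have "gev v (of_nat k * X ^ k * a) (of_nat k * \<xi> + r)"
        by (rule gev_mult[OF val gev_mult0L[OF val gn gXk] ga])
      then show ?thesis unfolding D2_def T2_def using False
        by (simp, intro gev_xi[OF val _ xipos, where d = "of_nat k + (P - 2 + ip)"])
           (use kk P3 ip in \<open>auto simp: r_def algebra_simps\<close>)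
    qed
    have g5: "gev v D5 (2 * P * \<xi>)"
    proof (cases "k \<le> p - 1")
      case True
      then show ?thesis unfolding D5_def T5_def X_def b_def
        by (simp add: power_mult_distrib gev_0[OF val] algebra_simps)
    next
      case False
      then have kk: "(of_nat k :: rat) \<ge> P" unfolding Pk by simp
      have "gev v (of_nat k * X ^ k * b) (of_nat k * \<xi> + P * \<xi>)"
        by (rule gev_mult[OF val gev_mult0L[OF val gn gXk] gb])
      then show ?thesis unfolding D5_def T5_def using False
        by (simp, intro gev_xi[OF val _ xipos, where d = "of_nat k + P"])
           (use kk P3 ip in \<open>auto simp: algebra_simps\<close>)
    qed
    have g6: "gev v D6 (2 * P * \<xi>)"
    proof (cases "k = 1")
      case True
      have "D6 = 0" unfolding D6_def T6_def X_def c_def using True eps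
        by (auto simp: algebra_simps power2_eq_square)
      then show ?thesis by (simp add: gev_0[OF val])
    next
      case False
      then have kk: "(of_nat k :: rat) \<ge> 2" using k1 by simp
      have "gev v (of_nat k * X ^ k * c) (of_nat k * \<xi> + (2 * P - 2 + ip) * \<xi>)"
        by (rule gev_mult[OF val gev_mult0L[OF val gn gXk] gc])
      then show ?thesis unfolding D6_def T6_def using False
        by (simp, intro gev_xi[OF val _ xipos, where d = "of_nat k + (2 * P - 2 + ip)"])
           (use kk P3 ip in \<open>auto simp: algebra_simps\<close>)
    qed
    have g7: "gev v D7 (2 * P * \<xi>)"
    proof (cases "k = 1")
      case True
      then show ?thesis unfolding D7_def C_def by (simp add: gev_0[OF val] numeral_2_eq_2)
    next
      case False
      then have kk: "(of_nat k :: rat) \<ge> 2" using k1 by simp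
      have eq: "Y ^ 2 - a ^ 2 = (b + c) * (a + a + b + c)" unfolding Y_def
        by (simp add: algebra_simps power2_eq_square)
      have gbc: "gev v (b + c) (P * \<xi>)" by (rule gev_add[OF val gb gev_mono[OF val gc Pc]])
      have gaa: "gev v (a + a + b + c) r"
        by (intro gev_add[OF val] ga gev_mono[OF val gb rP] gev_mono[OF val gc rc])
      have "gev v D7 (of_nat k * \<xi> + (P * \<xi> + r))" unfolding D7_def eq
        by (rule gev_mult[OF val gev_mult0L[OF val gC gXk] gev_mult[OF val gbc gaa]])
      then show ?thesis
        by (intro gev_xi[OF val _ xipos, where d = "of_nat k + (P + (P - 2 + ip))"])
           (use kk P3 ip in \<open>auto simp: r_def algebra_simps\<close>)
    qed
    have g34: "gev v D34 (2 * P * \<xi>)"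
    proof -
      consider "k = 1" | "k = 2" | "k = 3" | "k \<ge> 4" using k1 by linarith
      then show ?thesis
      proof cases
        case 1
        then show ?thesis unfolding D34_def C_def T3_def T4_def by (simp add: gev_0[OF val] numeral_2_eq_2)
      next
        case 2
        have "D34 = 0" unfolding D34_def C_def T3_def T4_def X_def a_def using 2 eps
          by (auto simp: algebra_simps power2_eq_square)
        then show ?thesis by (simp add: gev_0[OF val])
      next
        case 3
        have c3: "(3 choose 2) = (3::nat)" by (simp add: numeral_3_eq_3 numeral_2_eq_2)
        have eq: "D34 = (3 * \<epsilon> * \<zeta> ^ 3 * u ^ 3 * w ^ 2) * (s2 * (t + t + s2))"
          unfolding D34_def C_def T3_def T4_def X_def a_def sig_n1 using 3 eps c3
          by (auto simp: algebra_simps power2_eq_square power3_eq_cube)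
        have g3: "gev v (3::'a) 0" using gn[of 3] by simp
        have gA: "gev v (3 * \<epsilon> * \<zeta> ^ 3 * u ^ 3 * w ^ 2) (of_nat 3 * \<xi> + of_nat 2 * ((P - 1) * \<xi>))"
          by (rule gev_mult[OF val gev_mult0L[OF val gev_mult0L[OF val gev_mult0L[OF val g3 geps] gev_power0[OF val gz]] gev_power[OF val gu]] gev_power[OF val gw]])
        have ipp0: "0 \<le> ip * ip" by simp
        have ipl: "ip - ip * ip \<le> 1 - ip" using ip(2) ipp0 by linarith
        have s2b: "- ((1 - ip) * \<xi>) \<le> - ((ip - ip * ip) * \<xi>)"
          using ipl xipos by (intro le_imp_neg_le mult_right_mono) auto
        have gB: "gev v (s2 * (t + t + s2)) (- ((ip - ip * ip) * \<xi>) + - ((1 - ip) * \<xi>))"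
          by (rule gev_mult[OF val gs2 gev_add[OF val gev_add[OF val gt gt] gev_mono[OF val gs2 s2b]]])
        have ipp: "0 \<le> ip * ip" by simp
        have "gev v D34 ((of_nat 3 * \<xi> + of_nat 2 * ((P - 1) * \<xi>)) + (- ((ip - ip * ip) * \<xi>) + - ((1 - ip) * \<xi>)))"
          unfolding eq by (rule gev_mult[OF val gA gB])
        then show ?thesis
          by (intro gev_xi[OF val _ xipos, where d = "2 * P + ip * ip"])
             (use ipp in \<open>auto simp: algebra_simps\<close>)
      next
        case 4
        then have kk: "(of_nat k :: rat) \<ge> 4" by simp
        have "gev v (C * X ^ k * a ^ 2) (of_nat k * \<xi> + of_nat 2 * r)"
          by (rule gev_mult[OF val gev_mult0L[OF val gC gXk] gev_power[OF val ga]])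
        then show ?thesis unfolding D34_def T3_def T4_def using 4
          by (simp, intro gev_xi[OF val _ xipos, where d = "of_nat k + 2 * (P - 2 + ip)"])
             (use kk P3 ip in \<open>auto simp: r_def algebra_simps\<close>)
      qed
    qed
    show ?thesis unfolding decomp
      by (intro gev_add[OF val] g0 gR g1 g2 g5 g6 g34 g7)
  qed
  show "approx v (A ^ k) ((-1) ^ (n * k) * \<zeta> ^ k * pw (of_nat k / (of_nat (p ^ n) * (of_nat p - 1)))
      + (if k \<le> p + 1 then of_nat k * (-1) ^ (n * k) * \<zeta> ^ k
            * pw ((of_nat k + of_nat p - 1) / (of_nat (p ^ n) * (of_nat p - 1))) * \<sigma> (n + 1)
         else 0)
      + (if k = 2 then \<zeta> ^ 2 * pw (2 / (of_nat (p ^ (n - 1)) * (of_nat p - 1))) * \<sigma> (n + 1) ^ 2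
         else 0)
      + (if k = 3 then 3 * (-1) ^ n * \<zeta> ^ 3
            * pw ((2 * of_nat p ^ 2 - of_nat p + 2) / (of_nat (p ^ (n + 1)) * (of_nat p - 1)))
         else 0)
      + (if k \<le> p - 1 then \<beta> * of_nat k * (-1) ^ (n * (k + 1)) * \<zeta> ^ (k + 1)
            * pw ((of_nat k + of_nat p) / (of_nat (p ^ n) * (of_nat p - 1)))
         else 0)
      + (if k = 1 then \<beta> * \<zeta> ^ 2 * pw (2 / (of_nat (p ^ (n - 1)) * (of_nat p - 1))) * \<sigma> (n + 1)
         else 0)) (2 / (of_nat (p ^ (n - 1)) * (of_nat p - 1)))"
    unfolding approx_gev eqT by (subst E2) (rule main)
qed

end
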